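(* Let $m,k\in\mathbb{N}$, let $\alpha,\beta,\mu\in\mathbb{C}$ with $\alpha,1+\alpha+\beta+k\notin\mathbb{Z}_0^-$, $\Re(\beta)>0$ and $\Re(\mu)>0$. Then \[ \int_0^\infty t^{\beta-1}e^{-\mu t}\,{}_2F_2\left[\begin{array}{r} -m,\ \alpha;\\ -m-k,\ 1+\alpha+\beta+k;\end{array}\mu t\right]_m dt=\frac{\Gamma(\beta)}{\mu^{\beta}}\frac{\left(1+\alpha+k\right)_m\left(1+\beta+k\right)_m}{\left(1+k\right)_m\left(1+\alpha+\beta+k\right)_m}. \]
   Context: $\mathbb{N}=\{1,2,3,\dots\}$, $\mathbb{Z}_0^-=\{0,-1,-2,\dots\}$. For $a\in\mathbb{C}$ and $n\in\mathbb{N}_0$, $(a)_0=1$ and $(a)_n=a(a+1)\cdots(a+n-1)$. For $N\in\mathbb{N}_0$, the truncated series is ${}_2F_2\left[\begin{array}{r} a_1,a_2;\\ b_1,b_2;\end{array}z\right]_N=\sum_{n=0}^{N}\frac{(a_1)_n(a_2)_n}{(b_1)_n(b_2)_n}\frac{z^n}{n!}$ (first $N+1$ terms). The left side is the Mellin transform $\int_0^\infty t^{s-1}f(t)\,dt$ at $s=\beta$; $\mu^{\beta}$ denotes the principal power. *)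

theory Defs
  imports "HOL-Analysis.Analysis"
begin

definition trunc_hyp_2F2 :: "complex \<Rightarrow> complex \<Rightarrow> complex \<Rightarrow> complex \<Rightarrow> nat \<Rightarrow> complex \<Rightarrow> complex" where
  "trunc_hyp_2F2 a1 a2 b1 b2 N z =
     (\<Sum>n\<le>N. (pochhammer a1 n * pochhammer a2 n) / (pochhammer b1 n * pochhammer b2 n)
               * z ^ n / fact n)"

end

theory Submission
  imports Defs "HOL-Complex_Analysis.Complex_Analysis"
begin


definition tt :: "complex \<Rightarrow> complex \<Rightarrow> nat \<Rightarrow> nat \<Rightarrow> nat \<Rightarrow> complex" where
 "tt a b k n j = pochhammer (- of_nat n) j * pochhammer a j * pochhammer b j /
    (pochhammer (- of_nat n - of_nat k) j * pochhammer (1 + a + b + of_nat k) j * fact j)"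

lemma rat_id:
  fixes a b x y z T e f w v :: complex
  assumes e: "e = 1 + a + b + z + y" "e \<noteq> 0" and f: "f = y + 1" "f \<noteq> 0"
    and w: "w = 1 + z + x" "w \<noteq> 0" and v: "v = y - x - z" "v \<noteq> 0"
  shows "(1 + a + b + z + x) * w * (T * (- (x + 1)) * (a + y) * (b + y) / ((- w) * e * f))
    - (1 + a + z + x) * (1 + b + z + x) * (T * (y - x) * (a + y) * (b + y) / (v * e * f))
    = - (T * (y - x) * (a + y) * (b + y) / (v * e * f)) * (a + y + 1) * (b + y + 1)
      + T * (a + y) * (b + y)"
proof -
  define H where "H = T * (a + y) * (b + y) / (e * f * v)"
  have t1: "(1 + a + b + z + x) * w * (T * (- (x + 1)) * (a + y) * (b + y) / ((- w) * e * f)) = (1 + a + b + z + x) * H * v * (x + 1)"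
    unfolding H_def using e(2) f(2) w(2) v(2) by (simp add: field_simps)
  have t2: "T * (y - x) * (a + y) * (b + y) / (v * e * f) = H * (y - x)"
    unfolding H_def using e(2) f(2) v(2) by (simp add: field_simps)
  have t3: "T * (a + y) * (b + y) = H * e * f * v"
    unfolding H_def using e(2) f(2) v(2) by (simp add: field_simps)
  show ?thesis unfolding t1 t2 t3 unfolding e(1) f(1) v(1) by (simp add: algebra_simps)
qed

lemma tt_step:
  assumes k: "k \<ge> 1" and c: "1 + a + b + of_nat k \<notin> \<int>\<^sub>\<le>\<^sub>0" and N: "N \<le> n"
  shows "(1 + a + b + of_nat k + of_nat n) * (1 + of_nat k + of_nat n) * tt a b k (Suc n) (Suc N)
       - (1 + a + of_nat k + of_nat n) * (1 + b + of_nat k + of_nat n) * tt a b k n (Suc N)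
       = - tt a b k n (Suc N) * (a + of_nat N + 1) * (b + of_nat N + 1) + tt a b k n N * (a + of_nat N) * (b + of_nat N)"
proof -
  define c where "c = 1 + a + b + of_nat k"
  define x :: complex where "x = of_nat n"
  define y :: complex where "y = of_nat N"
  define z :: complex where "z = of_nat k"
  define e where "e = 1 + a + b + z + y"
  define f where "f = y + 1"
  define w where "w = 1 + z + x"
  define v where "v = y - x - z"
  have Q: "pochhammer (- of_nat n - of_nat k :: complex) N \<noteq> 0"
  proof
    assume "pochhammer (- of_nat n - of_nat k :: complex) N = 0"
    then obtain i where i: "i < N" "(- of_nat n - of_nat k :: complex) = - of_nat i"
      by (auto simp: pochhammer_eq_0_iff)
    hence "(of_nat (n + k) :: complex) = of_nat i" by (simp add: algebra_simps)
    hence "n + k = i" by (simp only: of_nat_eq_iff)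
    thus False using i(1) N by simp
  qed
  have W: "pochhammer c N \<noteq> 0" using c unfolding c_def
    by (auto simp: pochhammer_eq_0_iff)
  have cN: "c + of_nat N \<noteq> 0"
  proof
    assume "c + of_nat N = 0"
    hence "c = - of_nat N" by (simp add: add_eq_0_iff)
    thus False using c unfolding c_def by (metis minus_of_nat_in_nonpos_Ints)
  qed
  have d1: "- of_nat n - of_nat k + of_nat N \<noteq> (0::complex)"
  proof -
    have "N \<noteq> n + k" using N k by simp
    hence "(of_nat N :: complex) \<noteq> of_nat (n + k)" by (metis of_nat_eq_iff)
    hence "(of_nat N - of_nat (n + k) :: complex) \<noteq> 0" by simp
    moreover have "- of_nat n - of_nat k + of_nat N = (of_nat N - of_nat (n + k) :: complex)" by simp
    ultimately show ?thesis by metis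
  qed
  have d2: "- of_nat (Suc n) - of_nat k \<noteq> (0::complex)"
  proof -
    have "(of_nat (Suc n + k) :: complex) \<noteq> 0" by (simp only: of_nat_eq_0_iff)
    moreover have "- of_nat (Suc n) - of_nat k = - (of_nat (Suc n + k) :: complex)" by simp
    ultimately show ?thesis by (metis neg_equal_0_iff_equal)
  qed
  have e01: "c + of_nat N = e" by (simp add: e_def c_def y_def z_def add_ac)
  have e00: "e \<noteq> 0" using cN e01 by metis
  note e0 = e00 e01
  have f01: "of_nat (Suc N) = f" by (simp add: f_def y_def)
  have f00: "f \<noteq> 0" unfolding f01[symmetric] by (metis of_nat_eq_0_iff nat.distinct(1))
  note f0 = f00 f01
  have w01: "- of_nat (Suc n) - of_nat k = - w" by (simp add: w_def x_def z_def algebra_simps)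
  have w00: "w \<noteq> 0" using d2 w01 by (metis neg_equal_0_iff_equal)
  note w0 = w00 w01
  have v01: "- of_nat n - of_nat k + of_nat N = v" by (simp add: v_def x_def y_def z_def algebra_simps)
  have v00: "v \<noteq> 0" using d1 v01 by metis
  note v0 = v00 v01
  have P1: "pochhammer (- of_nat (Suc n) :: complex) (Suc N) = (- (x + 1)) * pochhammer (- of_nat n) N"
    by (simp add: pochhammer_rec x_def)
  have Q1: "pochhammer (- of_nat (Suc n) - of_nat k :: complex) (Suc N) = (- w) * pochhammer (- of_nat n - of_nat k) N"
  proof -
    have arg: "- of_nat (Suc n) - of_nat k + 1 = (- of_nat n - of_nat k :: complex)" by simp
    show ?thesis unfolding pochhammer_rec arg by (simp only: w01)
  qed
  define T where "T = tt a b k n N"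
  have e1: "tt a b k n (Suc N) = T * (y - x) * (a + y) * (b + y) / (v * e * f)"
    unfolding T_def tt_def unfolding pochhammer_Suc fact_Suc c_def[symmetric] f0(2) e0(2) v0(2)
    unfolding x_def[symmetric] y_def[symmetric]
    using Q W e0(1) v0(1) f0(1) by (simp add: field_simps)
  have e2: "tt a b k (Suc n) (Suc N) = T * (- (x + 1)) * (a + y) * (b + y) / ((- w) * e * f)"
    unfolding T_def tt_def unfolding P1 Q1 unfolding pochhammer_Suc fact_Suc c_def[symmetric] f0(2) e0(2)
    unfolding x_def[symmetric] y_def[symmetric]
    using Q W e0(1) w0(1) f0(1) by (simp add: field_simps)
  have main: "(1 + a + b + z + x) * w * tt a b k (Suc n) (Suc N)
    - (1 + a + z + x) * (1 + b + z + x) * tt a b k n (Suc N)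
    = - tt a b k n (Suc N) * (a + y + 1) * (b + y + 1) + tt a b k n N * (a + y) * (b + y)"
    unfolding e1 e2 T_def[symmetric]
    by (rule rat_id[OF e_def e0(1) f_def f0(1) w_def w0(1) v_def v0(1)])
  thus ?thesis by (simp add: w_def x_def y_def z_def add_ac)
qed


lemma tt_0: "tt a b k n 0 = 1" by (simp add: tt_def)

lemma tt_vanish: "tt a b k n (Suc n) = 0"
  by (auto simp: tt_def pochhammer_eq_0_iff)

lemma frac4:
  fixes x1 x2 x3 x4 y1 y2 y3 y4 :: complex
  shows "(x1 * y1) * (x2 * y2) / ((x3 * y3) * (x4 * y4)) = (y1 * y2) / (y4 * y3) * (x1 * x2 / (x3 * x4))"
  by (simp add: divide_inverse mult_ac)

lemma tt_tele:
  assumes k: "k \<ge> 1" and c: "1 + a + b + of_nat k \<notin> \<int>\<^sub>\<le>\<^sub>0" and N: "N \<le> Suc n"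
    and A: "A = (1 + a + b + of_nat k + of_nat n) * (1 + of_nat k + of_nat n)"
    and B: "B = (1 + a + of_nat k + of_nat n) * (1 + b + of_nat k + of_nat n)"
  shows "(\<Sum>j\<le>N. A * tt a b k (Suc n) j - B * tt a b k n j)
       = - tt a b k n N * (a + of_nat N) * (b + of_nat N)"
  using N
proof (induction N)
  case 0
  show ?case by (simp add: tt_0 A B algebra_simps)
next
  case (Suc N)
  hence "N \<le> n" by simp
  note st = tt_step[OF k c this, folded A B]
  have "(\<Sum>j\<le>Suc N. A * tt a b k (Suc n) j - B * tt a b k n j)
      = (\<Sum>j\<le>N. A * tt a b k (Suc n) j - B * tt a b k n j) + (A * tt a b k (Suc n) (Suc N) - B * tt a b k n (Suc N))"
    by simp
  also have "\<dots> = - tt a b k n N * (a + of_nat N) * (b + of_nat N) + (- tt a b k n (Suc N) * (a + of_nat N + 1) * (b + of_nat N + 1) + tt a b k n N * (a + of_nat N) * (b + of_nat N))"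
    using Suc.IH Suc.prems st by simp
  also have "\<dots> = - tt a b k n (Suc N) * (a + of_nat (Suc N)) * (b + of_nat (Suc N))"
    by (simp add: add_ac)
  finally show ?case .
qed

lemma saal:
  assumes k: "k \<ge> 1" and c: "1 + a + b + of_nat k \<notin> \<int>\<^sub>\<le>\<^sub>0"
  shows "(\<Sum>j\<le>n. tt a b k n j) = pochhammer (1 + a + of_nat k) n * pochhammer (1 + b + of_nat k) n
      / (pochhammer (1 + of_nat k) n * pochhammer (1 + a + b + of_nat k) n)"
proof (induction n)
  case 0
  show ?case by (simp add: tt_0)
next
  case (Suc n)
  define A where "A = (1 + a + b + of_nat k + of_nat n) * (1 + of_nat k + of_nat n)"
  define B where "B = (1 + a + of_nat k + of_nat n) * (1 + b + of_nat k + of_nat n)"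
  have cn: "1 + a + b + of_nat k + of_nat n \<noteq> 0"
  proof
    assume "1 + a + b + of_nat k + of_nat n = 0"
    hence "1 + a + b + of_nat k = - of_nat n" by (simp add: add_eq_0_iff)
    thus False using c by (metis minus_of_nat_in_nonpos_Ints)
  qed
  have kn: "1 + of_nat k + of_nat n \<noteq> (0::complex)"
  proof -
    have "(of_nat (Suc (k + n)) :: complex) \<noteq> 0" by (simp only: of_nat_eq_0_iff)
    moreover have "(of_nat (Suc (k + n)) :: complex) = 1 + of_nat k + of_nat n" by simp
    ultimately show ?thesis by metis
  qed
  have A0: "A \<noteq> 0" using cn kn by (simp add: A_def)
  have "(\<Sum>j\<le>Suc n. A * tt a b k (Suc n) j - B * tt a b k n j) = 0"
    using tt_tele[OF k c, of "Suc n" n A B] by (simp add: A_def B_def tt_vanish)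
  hence "A * (\<Sum>j\<le>Suc n. tt a b k (Suc n) j) = B * (\<Sum>j\<le>Suc n. tt a b k n j)"
    by (simp only: sum_subtractf sum_distrib_left[symmetric] right_minus_eq)
  also have "(\<Sum>j\<le>Suc n. tt a b k n j) = (\<Sum>j\<le>n. tt a b k n j)"
    by (simp add: tt_vanish)
  finally have "(\<Sum>j\<le>Suc n. tt a b k (Suc n) j) = B / A * (\<Sum>j\<le>n. tt a b k n j)"
    using A0 by (simp add: field_simps)
  also note Suc.IH
  also have "B / A * (pochhammer (1 + a + of_nat k) n * pochhammer (1 + b + of_nat k) n
      / (pochhammer (1 + of_nat k) n * pochhammer (1 + a + b + of_nat k) n))
      = pochhammer (1 + a + of_nat k) (Suc n) * pochhammer (1 + b + of_nat k) (Suc n)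
      / (pochhammer (1 + of_nat k) (Suc n) * pochhammer (1 + a + b + of_nat k) (Suc n))"
    unfolding pochhammer_Suc A_def B_def by (rule frac4[symmetric])
  finally show ?case .
qed



definition ff :: "complex \<Rightarrow> complex \<Rightarrow> real \<Rightarrow> complex" where
  "ff s \<mu> t = of_real t powr (s - 1) * exp (- \<mu> * of_real t)"

lemma norm_ff: "t > 0 \<Longrightarrow> norm (ff s \<mu> t) = t powr (Re s - 1) * exp (- Re \<mu> * t)"
  by (simp add: ff_def norm_mult norm_powr_real_powr)

lemma norm_gam: "t > 0 \<Longrightarrow> norm (of_real t powr (s - 1) / of_real (exp (a * t)) :: complex) = t powr (Re s - 1) * exp (- a * t)"
  by (simp add: norm_divide norm_powr_real_powr exp_minus field_simps)

lemma cont_ff: "continuous_on {0<..} (ff s \<mu>)"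
  unfolding ff_def by (intro continuous_intros) (auto simp: complex_nonpos_Reals_iff)

lemma hh_integrable:
  assumes "Re s > 0" "a > 0"
  shows "(\<lambda>t. t powr (Re s - 1) * exp (- a * t)) integrable_on {0<..}"
proof -
  have "(\<lambda>t. complex_of_real t powr (s - 1) / of_real (exp (a * t))) absolutely_integrable_on {0<..}"
    by (rule absolutely_integrable_Gamma_integral[OF assms])
  hence "(\<lambda>t. norm (complex_of_real t powr (s - 1) / of_real (exp (a * t)))) integrable_on {0<..}"
    by (simp add: absolutely_integrable_on_def)
  thus ?thesis by (rule integrable_spike_finite[of "{}", rotated 2]) (auto simp: norm_gam)
qed

lemma ff_abs_integrable:
  assumes "Re s > 0" "Re \<mu> > 0"
  shows "ff s \<mu> absolutely_integrable_on {0<..}"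
proof (rule measurable_bounded_by_integrable_imp_absolutely_integrable)
  show "ff s \<mu> \<in> borel_measurable (lebesgue_on {0<..})"
    by (rule continuous_imp_measurable_on_sets_lebesgue[OF cont_ff]) auto
  show "(\<lambda>t. t powr (Re s - 1) * exp (- Re \<mu> * t)) integrable_on {0<..}"
    by (rule hh_integrable[OF assms])
qed (auto simp: norm_ff)


lemma ff_real:
  assumes s: "Re s > 0" and a: "a > 0"
  shows "(ff s (of_real a) has_integral Gamma s / of_real a powr s) {0<..}"
proof -
  define g where "g t = (of_real t powr (s - 1) / of_real (exp t) :: complex)" for t
  have gi: "set_integrable lebesgue {0<..} g"
    using absolutely_integrable_Gamma_integral'[OF s] unfolding g_def by simp
  have "(g has_integral Gamma s) {0<..}"
    using Gamma_integral_complex'[OF s] unfolding g_def by simp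
  hence "integral {0<..} g = Gamma s" by (rule integral_unique)
  hence "(LINT x:{0<..}|lebesgue. g x) = Gamma s"
    using set_lebesgue_integral_eq_integral(2)[OF gi] by simp
  hence hb: "has_bochner_integral lebesgue (\<lambda>x. indicator {0<..} x *\<^sub>R g x) (Gamma s)"
    using gi by (simp add: has_bochner_integral_iff set_integrable_def set_lebesgue_integral_def)
  have hb2: "has_bochner_integral lebesgue (\<lambda>x. indicator {0<..} (0 + a * x) *\<^sub>R g (0 + a * x)) (Gamma s /\<^sub>R \<bar>a\<bar>)"
    using hb has_bochner_integral_lebesgue_real_affine_iff[of a "\<lambda>x. indicator {0<..} x *\<^sub>R g x" "Gamma s" 0] a
    by simp
  define c where "c = (of_real a powr (s - 1) :: complex)"
  have c0: "c \<noteq> 0" using a by (simp add: c_def)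
  have eq: "indicator {0<..} (0 + a * x) *\<^sub>R g (0 + a * x) = c * (indicator {0<..} x *\<^sub>R ff s (of_real a) x)" for x
  proof (cases "x > 0")
    case True
    have "g (a * x) = of_real (a * x) powr (s - 1) / of_real (exp (a * x))" by (simp add: g_def)
    also have "of_real (a * x) powr (s - 1) = c * of_real x powr (s - 1)"
      unfolding c_def of_real_mult using a True by (intro powr_times_real) auto
    also have "of_real (exp (a * x)) = exp (of_real a * of_real x :: complex)"
      by (simp add: exp_of_real[symmetric])
    finally have "g (a * x) = c * ff s (of_real a) x"
      by (simp add: ff_def exp_minus field_simps)
    thus ?thesis using True a by (simp add: indicator_def zero_less_mult_iff)
  next
    case False
    thus ?thesis using a by (simp add: indicator_def zero_less_mult_iff)
  qed
  have hb3: "has_bochner_integral lebesgue (\<lambda>x. indicator {0<..} x *\<^sub>R ff s (of_real a) x) (inverse c * (Gamma s /\<^sub>R \<bar>a\<bar>))"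
  proof -
    have "has_bochner_integral lebesgue (\<lambda>x. inverse c * (c * (indicator {0<..} x *\<^sub>R ff s (of_real a) x))) (inverse c * (Gamma s /\<^sub>R \<bar>a\<bar>))"
      using has_bochner_integral_mult_right[OF hb2[unfolded eq], of "inverse c"] .
    moreover have "inverse c * (c * y) = y" for y :: complex
      using c0 by (simp flip: mult.assoc)
    ultimately show ?thesis by simp
  qed
  have val: "inverse c * (Gamma s /\<^sub>R \<bar>a\<bar>) = Gamma s / of_real a powr s"
  proof -
    have "of_real a powr s = c * of_real a" unfolding c_def
      using powr_add[of "of_real a :: complex" "s - 1" 1] a by simp
    thus ?thesis using a c0 by (simp add: scaleR_conv_of_real field_simps)
  qed
  have "((\<lambda>x. indicator {0<..} x *\<^sub>R ff s (of_real a) x) has_integral (Gamma s / of_real a powr s)) UNIV"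
    using has_integral_integral_lebesgue[OF integrable.intros[OF hb3]]
      has_bochner_integral_integral_eq[OF hb3] val by simp
  thus ?thesis unfolding indicator_scaleR_eq_if has_integral_restrict_UNIV .
qed


definition II :: "nat \<Rightarrow> real set" where
  "II n = cbox (inverse (real (Suc n))) (real (Suc n))"

lemma II_sub: "II n \<subseteq> {0<..}"
  unfolding II_def cbox_interval by (auto intro: less_le_trans[of 0 "inverse (real (Suc n))"])

lemma II_eventually:
  assumes "t > 0" shows "eventually (\<lambda>n. t \<in> II n) sequentially"
proof -
  define N where "N = nat \<lceil>t + 1 / t\<rceil>"
  have "t \<in> II n" if "n \<ge> N" for n
  proof -
    have "t + 1 / t \<le> real N" unfolding N_def by (rule real_nat_ceiling_ge)
    also have "\<dots> \<le> real n" using that by simp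
    finally have tn: "t + 1 / t \<le> real n" .
    have "1 / t > 0" using assms by simp
    hence "t \<le> real n" using tn by linarith
    hence h1: "t \<le> real (Suc n)" by simp
    have "1 / t \<le> real (Suc n)" using tn assms by simp
    hence "inverse (real (Suc n)) \<le> t" using assms by (simp add: field_simps)
    thus ?thesis using h1 unfolding II_def cbox_interval by simp
  qed
  thus ?thesis unfolding eventually_sequentially by blast
qed

lemma ff_cont_II: "continuous_on (II n) (ff s \<mu>)"
  by (rule continuous_on_subset[OF cont_ff II_sub])

lemma Fn_holo: "(\<lambda>\<mu>. integral (II n) (ff s \<mu>)) holomorphic_on UNIV"
  unfolding II_def
proof (rule leibniz_rule_holomorphic[where fx = "\<lambda>\<mu> t. of_real t powr (s - 1) * (exp (- \<mu> * of_real t) * (- of_real t))"])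
  fix \<mu> :: complex and t :: real
  show "((\<lambda>\<mu>. ff s \<mu> t) has_field_derivative of_real t powr (s - 1) * (exp (- \<mu> * of_real t) * (- of_real t))) (at \<mu> within UNIV)"
    unfolding ff_def by (auto intro!: derivative_eq_intros)
next
  fix \<mu> :: complex
  show "ff s \<mu> integrable_on cbox (inverse (real (Suc n))) (real (Suc n))"
    using ff_cont_II[of n s \<mu>] unfolding II_def by (rule integrable_continuous)
next
  have pos: "\<And>t. t \<in> cbox (inverse (real (Suc n))) (real (Suc n)) \<Longrightarrow> t > 0"
    using II_sub[of n] unfolding II_def by auto
  show "continuous_on (UNIV \<times> cbox (inverse (real (Suc n))) (real (Suc n)))
     (\<lambda>(\<mu>, t). of_real t powr (s - 1) * (exp (- \<mu> * of_real t) * (- of_real t)))"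
    unfolding case_prod_unfold
    by (intro continuous_intros) (auto simp: complex_nonpos_Reals_iff intro: order_trans[of 0 "inverse (1 + real n)"])
qed auto


lemma ff_unif:
  assumes s: "Re s > 0" and z: "Re z > 0"
  shows "uniform_limit (cball z (Re z / 2)) (\<lambda>n \<mu>. integral (II n) (ff s \<mu>))
           (\<lambda>\<mu>. integral {0<..} (ff s \<mu>)) sequentially"
proof -
  define a0 where "a0 = Re z / 2"
  have a0: "a0 > 0" using z by (simp add: a0_def)
  define hh where "hh t = t powr (Re s - 1) * exp (- a0 * t)" for t
  have hi: "hh integrable_on {0<..}" unfolding hh_def by (rule hh_integrable[OF s a0])
  have hh0: "hh t \<ge> 0" for t by (simp add: hh_def)
  define gn where "gn n t = (if t \<in> II n then 0 else hh t)" for n t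
  have hcont: "continuous_on {0<..} hh" unfolding hh_def by (intro continuous_intros) auto
  have gn_int: "gn n integrable_on {0<..}" for n
  proof -
    have "hh integrable_on II n"
      using continuous_on_subset[OF hcont II_sub] unfolding II_def by (rule integrable_continuous)
    hence "(\<lambda>t. if t \<in> II n then hh t else 0) integrable_on {0<..}"
      using has_integral_restrict[OF II_sub[of n], of hh] unfolding integrable_on_def by blast
    from integrable_diff[OF hi this] show ?thesis
      by (rule integrable_eq) (simp add: gn_def)
  qed
  have conv: "(\<lambda>n. integral {0<..} (gn n)) \<longlonglongrightarrow> integral {0<..} (\<lambda>_::real. 0::real)"
  proof (rule dominated_convergence(2)[of gn "{0<..}" hh "\<lambda>_. 0"])
    show "gn k integrable_on {0<..}" for k by (rule gn_int)
    show "hh integrable_on {0<..}" by (rule hi)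
    show "norm (gn n t) \<le> hh t" for n t using hh0 by (simp add: gn_def)
    show "(\<lambda>n. gn n t) \<longlonglongrightarrow> 0" if "t \<in> {0<..}" for t
    proof (rule tendsto_eventually)
      show "\<forall>\<^sub>F n in sequentially. gn n t = 0"
        by (rule eventually_mono[OF II_eventually[of t]]) (use that in \<open>auto simp: gn_def\<close>)
    qed
  qed
  hence conv0: "(\<lambda>n. integral {0<..} (gn n)) \<longlonglongrightarrow> 0" by simp
  have bound: "norm (integral {0<..} (ff s \<mu>) - integral (II n) (ff s \<mu>)) \<le> integral {0<..} (gn n)"
    if mu: "\<mu> \<in> cball z (Re z / 2)" for \<mu> n
  proof -
    have "\<bar>Re (z - \<mu>)\<bar> \<le> norm (z - \<mu>)" by (rule abs_Re_le_cmod)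
    also have "\<dots> \<le> Re z / 2" using mu by (simp add: dist_norm)
    finally have "\<bar>Re z - Re \<mu>\<bar> \<le> Re z / 2" by simp
    hence Rmu: "Re \<mu> \<ge> a0" unfolding a0_def by linarith
    hence Rmu0: "Re \<mu> > 0" using a0 by simp
    have F: "(ff s \<mu> has_integral integral {0<..} (ff s \<mu>)) {0<..}"
      using ff_abs_integrable[OF s Rmu0] by (intro integrable_integral) (simp add: absolutely_integrable_on_def)
    have Fni: "ff s \<mu> integrable_on II n"
      using ff_cont_II[of n s \<mu>] unfolding II_def by (rule integrable_continuous)
    have Fn: "((\<lambda>t. if t \<in> II n then ff s \<mu> t else 0) has_integral integral (II n) (ff s \<mu>)) {0<..}"
      unfolding has_integral_restrict[OF II_sub[of n]] by (rule integrable_integral[OF Fni])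
    have D: "((\<lambda>t. ff s \<mu> t - (if t \<in> II n then ff s \<mu> t else 0)) has_integral
               integral {0<..} (ff s \<mu>) - integral (II n) (ff s \<mu>)) {0<..}"
      by (rule has_integral_diff[OF F Fn])
    have "norm (integral {0<..} (\<lambda>t. ff s \<mu> t - (if t \<in> II n then ff s \<mu> t else 0)))
          \<le> integral {0<..} (gn n)"
    proof (rule integral_norm_bound_integral)
      show "(\<lambda>t. ff s \<mu> t - (if t \<in> II n then ff s \<mu> t else 0)) integrable_on {0<..}"
        using D by blast
      show "gn n integrable_on {0<..}" by (rule gn_int)
      fix t :: real assume t: "t \<in> {0<..}"
      show "norm (ff s \<mu> t - (if t \<in> II n then ff s \<mu> t else 0)) \<le> gn n t"
      proof (cases "t \<in> II n")
        case False
        have "exp (- Re \<mu> * t) \<le> exp (- a0 * t)" using Rmu t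
          by (intro exp_mono) (simp add: mult_right_mono)
        hence "t powr (Re s - 1) * exp (- Re \<mu> * t) \<le> t powr (Re s - 1) * exp (- a0 * t)"
          by (intro mult_left_mono) auto
        thus ?thesis using False t by (simp add: gn_def hh_def norm_ff)
      qed (simp add: gn_def)
    qed
    thus ?thesis using integral_unique[OF D] by simp
  qed
  show ?thesis
  proof (rule uniform_limitI)
    fix e :: real assume e: "e > 0"
    from order_tendstoD(2)[OF conv0 e]
    have "eventually (\<lambda>n. integral {0<..} (gn n) < e) sequentially" .
    thus "\<forall>\<^sub>F n in sequentially. \<forall>\<mu>\<in>cball z (Re z / 2).
            dist (integral (II n) (ff s \<mu>)) (integral {0<..} (ff s \<mu>)) < e"
    proof (rule eventually_mono)
      fix n assume n: "integral {0<..} (gn n) < e"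
      show "\<forall>\<mu>\<in>cball z (Re z / 2). dist (integral (II n) (ff s \<mu>)) (integral {0<..} (ff s \<mu>)) < e"
      proof
        fix \<mu> assume "\<mu> \<in> cball z (Re z / 2)"
        from bound[OF this, of n] n show "dist (integral (II n) (ff s \<mu>)) (integral {0<..} (ff s \<mu>)) < e"
          by (simp add: dist_norm norm_minus_commute)
      qed
    qed
  qed
qed


lemma F_holo:
  assumes s: "Re s > 0"
  shows "(\<lambda>\<mu>. integral {0<..} (ff s \<mu>)) holomorphic_on {z. Re z > 0}"
proof -
  have "\<exists>f'. ((\<lambda>\<mu>. integral {0<..} (ff s \<mu>)) has_field_derivative f') (at z)"
    if zH: "z \<in> {z. Re z > 0}" for z
  proof -
    from zH have z: "Re z > 0" by simp
    define r where "r = Re z / 2"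
    have r: "r > 0" using z by (simp add: r_def)
    have cont: "\<forall>\<^sub>F n in sequentially. continuous_on (cball z r) (\<lambda>\<mu>. integral (II n) (ff s \<mu>)) \<and>
                  (\<lambda>\<mu>. integral (II n) (ff s \<mu>)) holomorphic_on ball z r"
      using Fn_holo by (intro always_eventually allI conjI holomorphic_on_imp_continuous_on)
        (auto intro: holomorphic_on_subset)
    have ulim: "uniform_limit (cball z r) (\<lambda>n \<mu>. integral (II n) (ff s \<mu>))
           (\<lambda>\<mu>. integral {0<..} (ff s \<mu>)) sequentially"
      unfolding r_def by (rule ff_unif[OF s z])
    have hol: "(\<lambda>\<mu>. integral {0<..} (ff s \<mu>)) holomorphic_on ball z r"
      by (rule holomorphic_uniform_limit[OF cont ulim]) auto
    have "z \<in> ball z r" using r by simp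
    thus ?thesis using hol holomorphic_on_open[OF open_ball] by blast
  qed
  thus ?thesis using holomorphic_on_open[OF open_halfspace_Re_gt] by blast
qed

lemma one_islimpt: "(1::complex) islimpt (complex_of_real ` {0<..})"
  unfolding islimpt_approachable
proof (intro allI impI)
  fix e :: real assume e: "e > 0"
  have d: "dist (complex_of_real (1 + e / 2)) 1 = e / 2"
  proof -
    have "complex_of_real (1 + e / 2) - 1 = complex_of_real (e / 2)" by simp
    thus ?thesis using e by (simp add: dist_norm del: of_real_add of_real_divide)
  qed
  show "\<exists>x'\<in>complex_of_real ` {0<..}. x' \<noteq> 1 \<and> dist x' 1 < e"
  proof (rule bexI[of _ "complex_of_real (1 + e / 2)"])
    show "complex_of_real (1 + e / 2) \<noteq> 1 \<and> dist (complex_of_real (1 + e / 2)) 1 < e"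
      using d e by (auto simp del: of_real_add of_real_divide)
    show "complex_of_real (1 + e / 2) \<in> complex_of_real ` {0<..}" using e by (intro imageI) simp
  qed
qed

lemma laplace:
  assumes s: "Re s > 0" and mu: "Re \<mu> > 0"
  shows "(ff s \<mu> has_integral Gamma s / \<mu> powr s) {0<..}"
proof -
  define H where "H = {z::complex. Re z > 0}"
  have nz: "z \<notin> \<real>\<^sub>\<le>\<^sub>0" if "z \<in> H" for z
    using that by (auto simp: H_def complex_nonpos_Reals_iff)
  have G: "(\<lambda>\<mu>. integral {0<..} (ff s \<mu>) - Gamma s / \<mu> powr s) holomorphic_on H"
    unfolding H_def using F_holo[OF s] nz unfolding H_def
    by (intro holomorphic_intros) (auto simp: complex_nonpos_Reals_iff)
  have "integral {0<..} (ff s \<mu>) - Gamma s / \<mu> powr s = 0"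
  proof (rule analytic_continuation[OF G])
    show "open H" unfolding H_def by (rule open_halfspace_Re_gt)
    show "connected H" unfolding H_def by (rule convex_connected[OF convex_halfspace_Re_gt])
    show "complex_of_real ` {0<..} \<subseteq> H" by (auto simp: H_def)
    show "1 \<in> H" by (simp add: H_def)
    show "1 islimpt complex_of_real ` {0<..}" by (rule one_islimpt)
    show "\<mu> \<in> H" using mu by (simp add: H_def)
    fix z assume "z \<in> complex_of_real ` {0<..}"
    then obtain a where a: "a > 0" "z = of_real a" by auto
    show "integral {0<..} (ff s z) - Gamma s / z powr s = 0"
      using integral_unique[OF ff_real[OF s a(1)]] a(2) by simp
  qed
  moreover have "(ff s \<mu> has_integral integral {0<..} (ff s \<mu>)) {0<..}"
    using ff_abs_integrable[OF s mu] by (intro integrable_integral) (simp add: absolutely_integrable_on_def)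
  ultimately show ?thesis by simp
qed



theorem mainTheorem19:
  fixes m k :: nat and \<alpha> \<beta> \<mu> :: complex
  assumes "m \<ge> 1" and "k \<ge> 1"
    and "\<alpha> \<notin> \<int>\<^sub>\<le>\<^sub>0"
    and "1 + \<alpha> + \<beta> + of_nat k \<notin> \<int>\<^sub>\<le>\<^sub>0"
    and "Re \<beta> > 0" and "Re \<mu> > 0"
  shows "((\<lambda>t::real. (of_real t) powr (\<beta> - 1) * exp (- \<mu> * of_real t)
            * trunc_hyp_2F2 (- of_nat m) \<alpha> (- of_nat m - of_nat k) (1 + \<alpha> + \<beta> + of_nat k)
                m (\<mu> * of_real t))
         has_integral
           (Gamma \<beta> / \<mu> powr \<beta>
            * (pochhammer (1 + \<alpha> + of_nat k) m * pochhammer (1 + \<beta> + of_nat k) m)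
            / (pochhammer (1 + of_nat k) m * pochhammer (1 + \<alpha> + \<beta> + of_nat k) m)))
         {0<..}"
proof -
  note k = assms(2) and cc = assms(4) and b = assms(5) and mu = assms(6)
  define C where "C n = pochhammer (- of_nat m) n * pochhammer \<alpha> n /
     (pochhammer (- of_nat m - of_nat k) n * pochhammer (1 + \<alpha> + \<beta> + of_nat k) n) / fact n" for n
  have mu0: "\<mu> \<noteq> 0" using mu by auto
  have eq: "(of_real t) powr (\<beta> - 1) * exp (- \<mu> * of_real t)
            * trunc_hyp_2F2 (- of_nat m) \<alpha> (- of_nat m - of_nat k) (1 + \<alpha> + \<beta> + of_nat k)
                m (\<mu> * of_real t)
        = (\<Sum>n\<le>m. C n * \<mu> ^ n * ff (\<beta> + of_nat n) \<mu> t)" if t: "t \<in> {0<..}" for t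
  proof -
    have t0: "complex_of_real t \<noteq> 0" using t by simp
    have pw: "of_real t powr (\<beta> + of_nat n - 1) = of_real t powr (\<beta> - 1) * (of_real t) ^ n" for n
    proof -
      have "\<beta> + of_nat n - 1 = (\<beta> - 1) + of_nat n" by simp
      hence "of_real t powr (\<beta> + of_nat n - 1) = of_real t powr (\<beta> - 1) * of_real t powr (of_nat n)"
        by (simp only: powr_add)
      thus ?thesis using t0 by simp
    qed
    show ?thesis
      unfolding trunc_hyp_2F2_def ff_def pw sum_distrib_left
      by (rule sum.cong) (simp_all add: C_def power_mult_distrib divide_inverse mult_ac)
  qed
  have hi: "((\<lambda>t. \<Sum>n\<le>m. C n * \<mu> ^ n * ff (\<beta> + of_nat n) \<mu> t) has_integral
      (\<Sum>n\<le>m. C n * \<mu> ^ n * (Gamma (\<beta> + of_nat n) / \<mu> powr (\<beta> + of_nat n)))) {0<..}"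
  proof (intro has_integral_sum)
    fix n assume "n \<in> {..m}"
    have "Re (\<beta> + of_nat n) > 0" using b by simp
    from has_integral_mult_right[OF laplace[OF this mu], of "C n * \<mu> ^ n"]
    show "((\<lambda>t. C n * \<mu> ^ n * ff (\<beta> + of_nat n) \<mu> t) has_integral
      C n * \<mu> ^ n * (Gamma (\<beta> + of_nat n) / \<mu> powr (\<beta> + of_nat n))) {0<..}" .
  qed simp
  have bnp: "\<beta> \<notin> \<int>\<^sub>\<le>\<^sub>0" using b by (auto elim!: nonpos_Ints_cases)
  have G0: "Gamma \<beta> \<noteq> 0" using bnp by (simp add: Gamma_eq_zero_iff)
  have term_eq: "C n * \<mu> ^ n * (Gamma (\<beta> + of_nat n) / \<mu> powr (\<beta> + of_nat n))
      = Gamma \<beta> / \<mu> powr \<beta> * tt \<alpha> \<beta> k m n" for n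
  proof -
    have g: "Gamma (\<beta> + of_nat n) = pochhammer \<beta> n * Gamma \<beta>"
      using pochhammer_Gamma[OF bnp, of n] G0 by (simp add: field_simps)
    have p: "\<mu> powr (\<beta> + of_nat n) = \<mu> powr \<beta> * \<mu> ^ n"
      using mu0 by (simp add: powr_add)
    have p0: "\<mu> powr \<beta> \<noteq> 0" using mu0 by simp
    have mn: "\<mu> ^ n \<noteq> 0" using mu0 by simp
    show ?thesis unfolding g p tt_def C_def using p0 mn
      by (simp add: divide_inverse mult_ac)
  qed
  have val: "(\<Sum>n\<le>m. C n * \<mu> ^ n * (Gamma (\<beta> + of_nat n) / \<mu> powr (\<beta> + of_nat n)))
     = Gamma \<beta> / \<mu> powr \<beta>
            * (pochhammer (1 + \<alpha> + of_nat k) m * pochhammer (1 + \<beta> + of_nat k) m)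
            / (pochhammer (1 + of_nat k) m * pochhammer (1 + \<alpha> + \<beta> + of_nat k) m)"
    unfolding term_eq sum_distrib_left[symmetric] saal[OF k cc] by simp
  show ?thesis
    using hi unfolding val
    by (subst has_integral_cong[OF eq]) auto
qed

end
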